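(* Fix $\lambda\in(0,\tfrac1{16})$, $\nu=\sqrt{1-16\lambda}$, $t_1=\frac{1-\nu}{4\lambda}$, an integer $l\ge2$, $\ell=(l-1)(l+2)$, $t_i\in(0,t_1)$, and let $G(t)=\tfrac12-\lambda t$, $\beta(t)=1-2tG(t)$, $\gamma(t)=2G(t)$. For $\kappa\in\mathbb{R}$ define $D(t)=\ell+(\kappa-4)\beta'(t)-(\kappa^2-6\kappa+8)\gamma(t)$. If $\kappa\in[0,4]$, then for all $t\in[t_i,t_1]$, $D(t)\ge0$ and $D'(t)\le0$. *)

theory Defs
  imports "HOL-Analysis.Analysis"
begin

definition G_fun :: "real \<Rightarrow> real \<Rightarrow> real" where
  "G_fun lam t = 1/2 - lam * t"

definition beta_fun :: "real \<Rightarrow> real \<Rightarrow> real" where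
  "beta_fun lam t = 1 - 2 * t * G_fun lam t"

definition gamma_fun :: "real \<Rightarrow> real \<Rightarrow> real" where
  "gamma_fun lam t = 2 * G_fun lam t"

definition D_fun :: "real \<Rightarrow> real \<Rightarrow> real \<Rightarrow> real \<Rightarrow> real" where
  "D_fun lam ell \<kappa> t =
     ell + (\<kappa> - 4) * deriv (beta_fun lam) t - (\<kappa>^2 - 6*\<kappa> + 8) * gamma_fun lam t"

end

theory Submission
  imports Defs
begin

lemma beta_deriv: "deriv (beta_fun lam) t = 4*lam*t - 1"
proof -
  have "beta_fun lam = (\<lambda>t. 1 - t + 2*lam*t^2)"
    by (auto simp: beta_fun_def G_fun_def fun_eq_iff algebra_simps power2_eq_square)
  moreover have "((\<lambda>t. 1 - t + 2*lam*t^2) has_field_derivative (4*lam*t - 1)) (at t)"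
    by (auto intro!: derivative_eq_intros simp: algebra_simps)
  ultimately show ?thesis by (simp add: DERIV_imp_deriv)
qed

lemma D_eq: "D_fun lam ell k = (\<lambda>t. ell + (k-4)*(4*lam*t - 1) - (k^2-6*k+8)*(1 - 2*lam*t))"
  by (rule ext) (simp add: D_fun_def beta_deriv gamma_fun_def G_fun_def right_diff_distrib)

lemma D_deriv: "deriv (D_fun lam ell k) t = 2*lam*k*(k-4)"
proof -
  have "((\<lambda>t. ell + (k-4)*(4*lam*t - 1) - (k^2-6*k+8)*(1 - 2*lam*t)) has_field_derivative (0 + (k-4)*(4*lam*1 - 0) - (k^2-6*k+8)*(0 - 2*lam*1))) (at t)"
    by (intro derivative_intros DERIV_cmult)
  moreover have "(0 + (k-4)*(4*lam*1 - 0) - (k^2-6*k+8)*(0 - 2*lam*1)) = 2*lam*k*(k-4)"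
    by (simp add: algebra_simps power2_eq_square)
  ultimately have "((\<lambda>t. ell + (k-4)*(4*lam*t - 1) - (k^2-6*k+8)*(1 - 2*lam*t)) has_field_derivative (2*lam*k*(k-4))) (at t)"
    by simp
  then show ?thesis unfolding D_eq by (rule DERIV_imp_deriv)
qed

theorem lemma1:
  fixes lam \<nu> t1 ti \<kappa> :: real and l :: int and ell :: real
  assumes "0 < lam" "lam < 1/16"
    and "\<nu> = sqrt (1 - 16*lam)"
    and "t1 = (1 - \<nu>) / (4*lam)"
    and "l \<ge> 2"
    and "ell = of_int ((l - 1) * (l + 2))"
    and "0 < ti" "ti < t1"
    and "0 \<le> \<kappa>" "\<kappa> \<le> 4"
  shows "\<forall>t\<in>{ti..t1}. D_fun lam ell \<kappa> t \<ge> 0 \<and> deriv (D_fun lam ell \<kappa>) t \<le> 0"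
proof
  fix t assume t: "t \<in> {ti..t1}"
  have nu: "0 \<le> \<nu>" using assms(2,3) by simp
  have "4*lam*t1 = 1 - \<nu>" using assms(1,4) by simp
  moreover have "4*lam*t \<le> 4*lam*t1" using t assms(1) by (intro mult_left_mono) auto
  ultimately have s1: "4*lam*t \<le> 1" using nu by linarith
  have "(l-1)*(l+2) \<ge> 1*4" using assms(5) by (intro mult_mono) auto
  hence ell: "ell \<ge> 4" using assms(6) by linarith
  define s where "s = 4*lam*t"
  have D: "D_fun lam ell \<kappa> t = ell + (4-\<kappa>)*(\<kappa>-1-s*\<kappa>/2)"
    unfolding D_eq s_def by (simp add: algebra_simps power2_eq_square)
  have "s*\<kappa> \<le> 1*\<kappa>" using mult_right_mono[OF s1 assms(9)] unfolding s_def .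
  hence "\<kappa>-1-s*\<kappa>/2 \<ge> \<kappa>/2-1" by linarith
  hence "(4-\<kappa>)*(\<kappa>-1-s*\<kappa>/2) \<ge> (4-\<kappa>)*(\<kappa>/2-1)"
    using assms(10) by (intro mult_left_mono) auto
  moreover have "\<kappa>*(3-\<kappa>/2) \<ge> 0" using assms(9,10) by (intro mult_nonneg_nonneg) auto
  hence "(4-\<kappa>)*(\<kappa>/2-1) \<ge> -4" by (simp add: algebra_simps)
  ultimately have "D_fun lam ell \<kappa> t \<ge> 0" using D ell by linarith
  moreover have "deriv (D_fun lam ell \<kappa>) t \<le> 0" unfolding D_deriv
    using assms(1,9,10) by (simp add: mult_nonneg_nonpos)
  ultimately show "D_fun lam ell \<kappa> t \<ge> 0 \<and> deriv (D_fun lam ell \<kappa>) t \<le> 0" by simp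
qed

end
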